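(* Let $q\ge2$, $b\ge2$, $t\ge1$ and $n\ge(t+1)b-1$. Let $\boldsymbol{x}=0^b\circ\boldsymbol{X}^1_{n-b,q,b}$ and $\boldsymbol{y}=0^{b-1}1\circ\boldsymbol{X}^1_{n-b,q,b}$ (so $\boldsymbol{x}=\boldsymbol{X}^0_{n,q,b}$ and $\boldsymbol{y}$ differs from $\boldsymbol{x}$ only in its $b$-th entry). Then \[ |\mathcal{D}_{t,b}(\boldsymbol{x})\cap\mathcal{D}_{t,b}(\boldsymbol{y})|=D_{q,b}(n,t)-D_{q,b}(n-b,t)+D_{q,b}(n-(q+1)b,t-q). \] In particular, $N^-_{q,b}(n,t)\ge D_{q,b}(n,t)-D_{q,b}(n-b,t)+D_{q,b}(n-(q+1)b,t-q)$.
   Context: $\Sigma_q=\{0,\ldots,q-1\}$; $\alpha^k$ denotes $k$ copies of $\alpha$, $\circ$ is concatenation. A $b$-burst-deletion at position $i\in[1,n-b+1]$ transforms $x_1\cdots x_n$ into $x_1\cdots x_{i-1}x_{i+b}\cdots x_n$. For $n\ge tb+1$, $t\ge0$, $\mathcal{D}_{t,b}(\boldsymbol{x})$ is the set of all length-$(n-tb)$ sequences obtainable from $\boldsymbol{x}$ by $t$ successive $b$-burst-deletions. The $b$-cyclic sequence $\boldsymbol{X}^{\sigma}_{m,q,b}=X_1\cdots X_m$ has $X_i\equiv\sigma+\lfloor (i-1)/b\rfloor\pmod q$. For $m\ge bs+1$, $s\ge0$: $D_{q,b}(m,s)=\max\{|\mathcal{D}_{s,b}(\boldsymbol{z})|:\boldsymbol{z}\in\Sigma_q^m\}$;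 conventions $D_{q,b}(m,s)=1$ if $m=bs\ge0$, $D_{q,b}(m,s)=0$ if $m<bs$ or $s<0$. $N^-_{q,b}(n,t)=\max\{|\mathcal{D}_{t,b}(\boldsymbol{u})\cap\mathcal{D}_{t,b}(\boldsymbol{v})|:\boldsymbol{u}\ne\boldsymbol{v}\in\Sigma_q^n\}$. *)

theory Defs
  imports Main
begin

definition seqs :: "nat \<Rightarrow> nat \<Rightarrow> nat list set" where
  "seqs q n = {z. length z = n \<and> set z \<subseteq> {..<q}}"

text \<open>A b-burst-deletion at (1-based) position i+1, i.e. 0-based start i, with i + b \<le> length x.\<close>
definition burst_del :: "nat \<Rightarrow> nat \<Rightarrow> 'a list \<Rightarrow> 'a list" where
  "burst_del b i x = take i x @ drop (i + b) x"

definition burst_dels :: "nat \<Rightarrow> 'a list \<Rightarrow> 'a list set" where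
  "burst_dels b x = {burst_del b i x | i. i + b \<le> length x}"

fun Dset :: "nat \<Rightarrow> nat \<Rightarrow> 'a list \<Rightarrow> 'a list set" where
  "Dset 0 b x = {x}"
| "Dset (Suc t) b x = (\<Union>y \<in> Dset t b x. burst_dels b y)"

definition cyc :: "nat \<Rightarrow> nat \<Rightarrow> nat \<Rightarrow> nat \<Rightarrow> nat list" where
  "cyc \<sigma> m q b = map (\<lambda>i. (\<sigma> + i div b) mod q) [0..<m]"

definition Dmax :: "nat \<Rightarrow> nat \<Rightarrow> int \<Rightarrow> int \<Rightarrow> nat" where
  "Dmax q b m s =
     (if s < 0 \<or> m < int b * s then 0
      else if m = int b * s then 1
      else Max {card (Dset (nat s) b z) | z. z \<in> seqs q (nat m)})"

definition Nminus :: "nat \<Rightarrow> nat \<Rightarrow> nat \<Rightarrow> nat \<Rightarrow> nat" where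
  "Nminus q b n t =
     Max {card (Dset t b u \<inter> Dset t b v) | u v. u \<in> seqs q n \<and> v \<in> seqs q n \<and> u \<noteq> v}"

end

theory Submission
  imports Defs
begin

inductive dl :: "nat \<Rightarrow> nat \<Rightarrow> 'a list \<Rightarrow> 'a list \<Rightarrow> bool" for b where
  dl0: "dl b 0 z z"
| dlB: "length u = b \<Longrightarrow> dl b s z y \<Longrightarrow> dl b (Suc s) (u @ z) y"
| dlC: "dl b s z y \<Longrightarrow> dl b s (a # z) (a # y)"

lemma dl_len: "dl b s z y \<Longrightarrow> length z = length y + s*b"
  by (induction rule: dl.induct) auto

lemma dl_set: "dl b s z y \<Longrightarrow> set y \<subseteq> set z"
  by (induction rule: dl.induct) auto

lemma dl_prefix: "dl b s z y \<Longrightarrow> dl b s (p @ z) (p @ y)"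
  by (induction p) (auto intro: dlC)

lemma dl_app: "dl b s1 z1 y1 \<Longrightarrow> dl b s2 z2 y2 \<Longrightarrow> dl b (s1+s2) (z1@z2) (y1@y2)"
proof (induction rule: dl.induct)
  case (dl0 z) then show ?case using dl_prefix by fastforce
next
  case (dlB u s z y) then show ?case using dl.dlB by fastforce
next
  case (dlC s z y a) then show ?case using dl.dlC by fastforce
qed

lemma dl_nil: "length z = k*b \<Longrightarrow> dl b k z []"
proof (induction k arbitrary: z)
  case 0 then show ?case using dl0 by fastforce
next
  case (Suc k)
  have "z = take b z @ drop b z" by simp
  moreover have "dl b (Suc k) (take b z @ drop b z) []"
    by (rule dlB) (use Suc in auto)
  ultimately show ?case by simp
qed

lemma dl_split: "dl b s z y \<Longrightarrow> y = v @ r \<Longrightarrow> \<exists>z1 z2 s1 s2. z = z1 @ z2 \<and> s = s1 + s2 \<and> dl b s1 z1 v \<and> dl b s2 z2 r"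
proof (induction arbitrary: v rule: dl.induct)
  case (dl0 z)
  then show ?case by (metis add_0 dl.dl0)
next
  case (dlB u s z y)
  then obtain z1 z2 s1 s2 where "z = z1 @ z2" "s = s1 + s2" "dl b s1 z1 v" "dl b s2 z2 r" by blast
  then show ?case using dl.dlB[OF dlB(1), of s1 z1 v]
    by (metis add_Suc append.assoc)
next
  case (dlC s z y a)
  show ?case
  proof (cases v)
    case Nil
    then show ?thesis using dlC by (metis add_0 append_Nil dl.dl0 dl.dlC)
  next
    case (Cons a' v')
    with dlC obtain z1 z2 s1 s2 where "z = z1 @ z2" "s = s1 + s2" "dl b s1 z1 v'" "dl b s2 z2 r" by fastforce
    then show ?thesis using Cons dlC by (metis Cons_eq_appendI dl.dlC list.inject)
  qed
qed

lemma dl_burst: "dl b s z (p @ u @ r) \<Longrightarrow> length u = b \<Longrightarrow> dl b (Suc s) z (p @ r)"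
proof -
  assume a: "dl b s z (p @ u @ r)" and l: "length u = b"
  obtain z1 z' s1 s' where 1: "z = z1 @ z'" "s = s1 + s'" "dl b s1 z1 p" "dl b s' z' (u@r)"
    using dl_split[OF a refl] by blast
  obtain z2 z3 s2 s3 where 2: "z' = z2 @ z3" "s' = s2 + s3" "dl b s2 z2 u" "dl b s3 z3 r"
    using dl_split[OF 1(4) refl] by blast
  have "length z2 = Suc s2 * b" using dl_len[OF 2(3)] l by simp
  then have "dl b (Suc s2) z2 []" by (rule dl_nil)
  from dl_app[OF 1(3) dl_app[OF this 2(4)]] show ?thesis using 1 2 by simp
qed

lemma Dset_Suc': "Dset (Suc s) b x = (\<Union>x'\<in>burst_dels b x. Dset s b x')"
  by (induction s arbitrary: x) auto

lemma Dset_cons: "y \<in> Dset s b z \<Longrightarrow> a#y \<in> Dset s b (a#z)"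
proof (induction s arbitrary: y)
  case 0 then show ?case by simp
next
  case (Suc s)
  then obtain y0 i where "y0 \<in> Dset s b z" "i + b \<le> length y0" "y = burst_del b i y0"
    by (auto simp: burst_dels_def)
  moreover have "a # burst_del b i y0 = burst_del b (Suc i) (a#y0)" by (simp add: burst_del_def)
  moreover have "a#y0 \<in> Dset s b (a#z)" using Suc.IH calculation(1) by blast
  ultimately show ?case by (auto simp: burst_dels_def intro!: bexI[of _ "a#y0"] exI[of _ "Suc i"])
qed

lemma Dset_dl: "Dset s b z = {y. dl b s z y}"
proof
  show "Dset s b z \<subseteq> {y. dl b s z y}"
  proof (induction s)
    case 0 then show ?case by (auto intro: dl0)
  next
    case (Suc s)
    show ?case
    proof
      fix y assume "y \<in> Dset (Suc s) b z"
      then obtain y0 i where y0: "dl b s z y0" "i + b \<le> length y0" "y = take i y0 @ drop (i+b) y0"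
        using Suc by (auto simp: burst_dels_def burst_del_def)
      have "y0 = take i y0 @ take b (drop i y0) @ drop (i+b) y0"
        by (metis append_take_drop_id drop_drop add.commute)
      with y0 have "dl b s z (take i y0 @ take b (drop i y0) @ drop (i+b) y0)" by simp
      from dl_burst[OF this] y0 show "y \<in> {y. dl b (Suc s) z y}" by simp
    qed
  qed
next
  show "{y. dl b s z y} \<subseteq> Dset s b z"
  proof
    fix y assume "y \<in> {y. dl b s z y}"
    then have "dl b s z y" by simp
    then show "y \<in> Dset s b z"
    proof (induction rule: dl.induct)
      case (dl0 z) then show ?case by simp
    next
      case (dlB u s z y)
      have "z \<in> burst_dels b (u @ z)" unfolding burst_dels_def burst_del_def
        using dlB(1) by (auto intro!: exI[of _ 0])
      then show ?case using dlB Dset_Suc' by blast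
    next
      case (dlC s z y a) from dlC.IH show ?case by (rule Dset_cons)
    qed
  qed
qed

definition Cs :: "nat \<Rightarrow> nat \<Rightarrow> 'a list \<Rightarrow> 'a set" where
  "Cs b s z = (\<lambda>j. z!(j*b)) ` {j. j \<le> s \<and> j*b < length z}"

definition fo :: "nat \<Rightarrow> nat \<Rightarrow> 'a list \<Rightarrow> 'a \<Rightarrow> nat" where
  "fo b s z c = (LEAST j. j \<le> s \<and> j*b < length z \<and> z!(j*b) = c)"

lemma dl_cons_inv: "dl b s z y \<Longrightarrow> y = c#w \<Longrightarrow>
   \<exists>j p z'. j \<le> s \<and> z = p @ c # z' \<and> length p = j*b \<and> dl b (s-j) z' w"
proof (induction rule: dl.induct)
  case (dl0 z) then show ?case by (auto intro!: exI[of _ 0] exI[of _ "[]"] dl.dl0)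
next
  case (dlB u s z y)
  from dlB.IH[OF dlB.prems] obtain j p z' where "j \<le> s" "z = p @ c # z'" "length p = j*b" "dl b (s-j) z' w" by blast
  then show ?case by (intro exI[of _ "Suc j"] exI[of _ "u@p"] exI[of _ z']) (use dlB(1) in auto)
next
  case (dlC s z y a) then show ?case by (intro exI[of _ 0] exI[of _ "[]"] exI[of _ z]) auto
qed

lemma dl_cons_intro: "j \<le> s \<Longrightarrow> z = p @ c # z' \<Longrightarrow> length p = j*b \<Longrightarrow> dl b (s-j) z' w \<Longrightarrow> dl b s z (c#w)"
  using dl_app[OF dl_nil[of p j b] dlC[of b "s-j" z' w c]] by simp

lemma dl_cons_iff:
  assumes "0 < b"
  shows "dl b s z (c#w) \<longleftrightarrow> c \<in> Cs b s z \<and> dl b (s - fo b s z c) (drop (fo b s z c * b + 1) z) w"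
proof
  assume d: "dl b s z (c#w)"
  obtain j p z' where j: "j \<le> s" "z = p @ c # z'" "length p = j*b" "dl b (s-j) z' w"
    using dl_cons_inv[OF d refl] by blast
  let ?P = "\<lambda>j. j \<le> s \<and> j*b < length z \<and> z!(j*b) = c"
  have Pj: "?P j" using j by (simp add: nth_append)
  define f where "f = fo b s z c"
  have Pf: "?P f" unfolding f_def fo_def by (rule LeastI[of ?P j, OF Pj])
  have fj: "f \<le> j" unfolding f_def fo_def by (rule Least_le, rule Pj)
  have "f*b \<le> j*b" using fj by simp
  then have fb: "f*b + 1 \<le> length (p@[c])" using j by simp
  have z2: "z = (p@[c]) @ z'" using j(2) by simp
  have dz: "drop (f*b+1) z = drop (f*b+1) (p@[c]) @ z'" unfolding z2 drop_append using fb by simp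
  have "length (drop (f*b+1) (p@[c])) = (j-f)*b" using j fj by (simp add: diff_mult_distrib)
  then have "dl b (j-f) (drop (f*b+1) (p@[c])) []" by (rule dl_nil)
  from dl_app[OF this j(4)] have "dl b (s - f) (drop (f*b+1) z) w"
    using dz fj j(1) by simp
  moreover have "c \<in> Cs b s z" unfolding Cs_def using Pj by (intro image_eqI[of _ _ j]) auto
  ultimately show "c \<in> Cs b s z \<and> dl b (s - fo b s z c) (drop (fo b s z c * b + 1) z) w"
    unfolding f_def by simp
next
  assume a: "c \<in> Cs b s z \<and> dl b (s - fo b s z c) (drop (fo b s z c * b + 1) z) w"
  let ?P = "\<lambda>j. j \<le> s \<and> j*b < length z \<and> z!(j*b) = c"
  from a have "c \<in> (\<lambda>j. z!(j*b)) ` {j. j \<le> s \<and> j*b < length z}" unfolding Cs_def by simp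
  then obtain j where "j \<le> s" "j*b < length z" "c = z!(j*b)" by blast
  then have "?P j" by simp
  then have Pf: "?P (fo b s z c)" unfolding fo_def by (rule LeastI)
  then have "z = take (fo b s z c * b) z @ c # drop (Suc (fo b s z c * b)) z"
    using id_take_nth_drop[of "fo b s z c * b" z] Pf by simp
  moreover have "length (take (fo b s z c * b) z) = fo b s z c * b" using Pf by simp
  ultimately show "dl b s z (c#w)"
    using dl_cons_intro[of "fo b s z c" s z "take (fo b s z c * b) z" c "drop (Suc (fo b s z c * b)) z" b w] Pf a
    by simp
qed

lemma finite_dl: "finite {y. dl b s z y}"
proof (rule finite_subset)
  show "{y. dl b s z y} \<subseteq> {y. set y \<subseteq> set z \<and> length y \<le> length z}"
  proof
    fix y assume "y \<in> {y. dl b s z y}"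
    then have d: "dl b s z y" by simp
    show "y \<in> {y. set y \<subseteq> set z \<and> length y \<le> length z}"
      using dl_set[OF d] dl_len[OF d] by simp
  qed
  show "finite {y. set y \<subseteq> set z \<and> length y \<le> length z}"
    by (rule finite_lists_length_le) simp
qed

lemma finite_Cs: "finite (Cs b s z)"
  unfolding Cs_def by simp

definition tlD :: "nat \<Rightarrow> nat \<Rightarrow> 'a list \<Rightarrow> 'a \<Rightarrow> 'a list set" where
  "tlD b s z c = {w. dl b (s - fo b s z c) (drop (fo b s z c * b + 1) z) w}"

lemma dl_decomp:
  assumes "0 < b" "length z > s*b"
  shows "{y. dl b s z y} = (\<Union>c\<in>Cs b s z. (#) c ` tlD b s z c)"
proof
  show "{y. dl b s z y} \<subseteq> (\<Union>c\<in>Cs b s z. (#) c ` tlD b s z c)"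
  proof
    fix y assume "y \<in> {y. dl b s z y}"
    then have d: "dl b s z y" by simp
    have "y \<noteq> []"
    proof
      assume "y = []"
      with dl_len[OF d] assms(2) show False by simp
    qed
    then obtain c w where y: "y = c#w" by (cases y) auto
    have "c \<in> Cs b s z" "w \<in> tlD b s z c"
      using d y dl_cons_iff[OF assms(1), of s z c w] unfolding tlD_def by auto
    then show "y \<in> (\<Union>c\<in>Cs b s z. (#) c ` tlD b s z c)" using y by blast
  qed
next
  show "(\<Union>c\<in>Cs b s z. (#) c ` tlD b s z c) \<subseteq> {y. dl b s z y}"
  proof
    fix y assume "y \<in> (\<Union>c\<in>Cs b s z. (#) c ` tlD b s z c)"
    then obtain c w where "c \<in> Cs b s z" "w \<in> tlD b s z c" "y = c#w" by blast
    then show "y \<in> {y. dl b s z y}" using dl_cons_iff[OF assms(1), of s z c w] unfolding tlD_def by simp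
  qed
qed

lemma card_UN_Cons: "finite C \<Longrightarrow> (\<forall>c\<in>C. finite (A c)) \<Longrightarrow>
   card (\<Union>c\<in>C. (#) c ` A c) = (\<Sum>c\<in>C. card (A c))"
  by (subst card_UN_disjoint) (auto simp: card_image)

lemma UN_Cons_inter: "(\<Union>c\<in>C1. (#) c ` A c) \<inter> (\<Union>c\<in>C2. (#) c ` B c) = (\<Union>c\<in>C1 \<inter> C2. (#) c ` (A c \<inter> B c))"
  by auto

lemma card_dl_decomp:
  assumes "0 < b" "length z > s*b"
  shows "card {y. dl b s z y} = (\<Sum>c\<in>Cs b s z. card (tlD b s z c))"
  unfolding dl_decomp[OF assms] by (rule card_UN_Cons) (simp_all add: finite_Cs tlD_def finite_dl)

lemma card_dl_inter_decomp:
  assumes "0 < b" "length z1 > s*b" "length z2 > s*b"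
  shows "card ({y. dl b s z1 y} \<inter> {y. dl b s z2 y}) =
    (\<Sum>c\<in>Cs b s z1 \<inter> Cs b s z2. card (tlD b s z1 c \<inter> tlD b s z2 c))"
proof -
  have "{y. dl b s z1 y} \<inter> {y. dl b s z2 y} = (\<Union>c\<in>Cs b s z1 \<inter> Cs b s z2. (#) c ` (tlD b s z1 c \<inter> tlD b s z2 c))"
    unfolding dl_decomp[OF assms(1,2)] dl_decomp[OF assms(1,3)] by (rule UN_Cons_inter)
  moreover have "card (\<Union>c\<in>Cs b s z1 \<inter> Cs b s z2. (#) c ` (tlD b s z1 c \<inter> tlD b s z2 c)) =
    (\<Sum>c\<in>Cs b s z1 \<inter> Cs b s z2. card (tlD b s z1 c \<inter> tlD b s z2 c))"
    by (rule card_UN_Cons) (simp_all add: finite_Cs tlD_def finite_dl)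
  ultimately show ?thesis by simp
qed

definition W :: "nat \<Rightarrow> nat \<Rightarrow> nat \<Rightarrow> nat \<Rightarrow> nat list" where
  "W q b a m = map (\<lambda>i. ((a+i) div b) mod q) [0..<m]"

lemma W_len[simp]: "length (W q b a m) = m"
  by (simp add: W_def)

lemma W_nth: "i < m \<Longrightarrow> W q b a m ! i = ((a+i) div b) mod q"
  by (simp add: W_def)

lemma W_drop: "drop k (W q b a m) = W q b (a+k) (m-k)"
  by (rule nth_equalityI) (auto simp: W_nth add.assoc)

lemma W_set: "0 < q \<Longrightarrow> set (W q b a m) \<subseteq> {..<q}"
  by (auto simp: W_def)

function F :: "nat \<Rightarrow> nat \<Rightarrow> int \<Rightarrow> int \<Rightarrow> nat" where
  "F q b m s = (if s < 0 \<or> m < int b * s then 0 else if m = int b * s then 1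
     else (\<Sum>j<q. F q b (m - int j * int b - 1) (s - int j)))"
  by pat_completeness auto
termination
proof (relation "measure (\<lambda>(q,b,m,s). nat m)")
  show "wf (measure (\<lambda>(q,b,m,s). nat m))" by simp
  fix q b :: nat and m s :: int and j
  assume a: "\<not> (s < 0 \<or> m < int b * s)" "m \<noteq> int b * s"
  then have "0 \<le> int b * s" by simp
  then have "m > 0" using a by linarith
  moreover have "0 \<le> int j * int b" by simp
  ultimately have "nat (m - int j * int b - 1) < nat m" unfolding zless_nat_conj by linarith
  then show "((q, b, m - int j * int b - 1, s - int j), q, b, m, s) \<in> measure (\<lambda>(q, b, m, s). nat m)"
    by simp
qed

declare F.simps[simp del]

lemma F_neg: "s < 0 \<or> m < int b * s \<Longrightarrow> F q b m s = 0"
  by (simp add: F.simps)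

lemma F_eq: "0 \<le> s \<Longrightarrow> m = int b * s \<Longrightarrow> F q b m s = 1"
  by (simp add: F.simps)

lemma F_rec: "0 \<le> s \<Longrightarrow> m > int b * s \<Longrightarrow>
   F q b m s = (\<Sum>j<q. F q b (m - int j * int b - 1) (s - int j))"
  by (subst F.simps) simp

lemma mod_add_inj_aux:
  fixes x u v q :: nat
  assumes "u < v" "v < q" "(x + u) mod q = (x + v) mod q"
  shows False
proof -
  have "q dvd (x + v) - (x + u)" using mod_eq_dvd_iff_nat[of "x+u" "x+v" q] assms by simp
  then have "q dvd v - u" by simp
  moreover have "0 < v - u" "v - u < q" using assms by auto
  ultimately show False using nat_dvd_not_less by blast
qed

lemma mod_add_inj:
  fixes x j j' q :: nat
  assumes "(x + j') mod q = (x + j) mod q" "j < q" "j' < q"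
  shows "j' = j"
  using mod_add_inj_aux[of j' j q x] mod_add_inj_aux[of j j' q x] assms
  by (metis linorder_neqE_nat)

lemma Cs_W: "0 < b \<Longrightarrow> Cs b s (W q b a m) = (\<lambda>j. (a div b + j) mod q) ` {j. j \<le> s \<and> j*b < m}"
  unfolding Cs_def by (intro image_cong) (auto simp: W_nth add.commute)

lemma fo_W:
  assumes "0 < b" "j < q" "j \<le> s" "j*b < m"
  shows "fo b s (W q b a m) ((a div b + j) mod q) = j"
  unfolding fo_def
proof (rule Least_equality)
  show "j \<le> s \<and> j * b < length (W q b a m) \<and> W q b a m ! (j * b) = (a div b + j) mod q"
    using assms by (simp add: W_nth add.commute)
next
  fix y assume y: "y \<le> s \<and> y * b < length (W q b a m) \<and> W q b a m ! (y * b) = (a div b + j) mod q"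
  show "j \<le> y"
  proof (rule ccontr)
    assume "\<not> j \<le> y"
    then have "y < j" by simp
    moreover have "(a div b + y) mod q = (a div b + j) mod q"
    proof -
      have "y*b < m" using y by simp
      then have "W q b a m ! (y*b) = (a div b + y) mod q" using assms(1) by (simp add: W_nth add.commute)
      then show ?thesis using y by simp
    qed
    ultimately show False using mod_add_inj[of "a div b" y q j] assms by simp
  qed
qed

lemma F_zero_cases:
  assumes "j < q" "\<not> (j \<le> s \<and> j*b < m)"
  shows "F q b (int m - int j * int b - 1) (int s - int j) = 0"
proof (cases "j \<le> s")
  case True
  then have "m \<le> j*b" using assms by simp
  moreover have "0 \<le> int b * (int s - int j)" using True by simp
  ultimately show ?thesis by (intro F_neg) (simp add: of_nat_mult[symmetric] del: of_nat_mult)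
next
  case False then show ?thesis by (intro F_neg) simp
qed

lemma card_W:
  assumes "0 < b" "0 < q"
  shows "card {y. dl b s (W q b a m) y} = F q b (int m) (int s)"
  using assms
proof (induction m arbitrary: a s rule: less_induct)
  case (less m)
  consider "m < s*b" | "m = s*b" | "m > s*b" by linarith
  then show ?case
  proof cases
    case 1
    then have "{y. dl b s (W q b a m) y} = {}" using dl_len[of b s "W q b a m"] by fastforce
    moreover have "int m < int b * int s"
    proof -
      have "m < b*s" using 1 by (simp add: mult.commute)
      then show ?thesis by (metis of_nat_less_iff of_nat_mult)
    qed
    ultimately show ?thesis using F_neg by simp
  next
    case 2
    have "{y. dl b s (W q b a m) y} = {[]}"
    proof
      show "{y. dl b s (W q b a m) y} \<subseteq> {[]}" using dl_len[of b s "W q b a m"] 2 by auto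
      show "{[]} \<subseteq> {y. dl b s (W q b a m) y}" using dl_nil[of "W q b a m" s b] 2 by simp
    qed
    moreover have "int m = int b * int s" using 2 by (metis of_nat_mult mult.commute)
    ultimately show ?thesis using F_eq by simp
  next
    case 3
    define g where "g = (\<lambda>j. (a div b + j) mod q)"
    define Jq where "Jq = {j. j < q \<and> j \<le> s \<and> j*b < m}"
    have CsJ: "Cs b s (W q b a m) = g ` Jq"
    proof -
      have "g ` {j. j \<le> s \<and> j*b < m} = g ` Jq"
      proof
        show "g ` Jq \<subseteq> g ` {j. j \<le> s \<and> j*b < m}" unfolding Jq_def by auto
        show "g ` {j. j \<le> s \<and> j*b < m} \<subseteq> g ` Jq"
        proof
          fix c assume "c \<in> g ` {j. j \<le> s \<and> j*b < m}"
          then obtain j where j: "j \<le> s" "j*b < m" "c = g j" by blast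
          have jm: "j mod q \<le> j" by simp
          have "j mod q \<le> s" using jm j(1) by linarith
          moreover have "(j mod q)*b < m" using mult_le_mono1[OF jm, of b] j(2) by linarith
          moreover have "j mod q < q" using less.prems by simp
          ultimately have "j mod q \<in> Jq" unfolding Jq_def by simp
          moreover have "g (j mod q) = c" unfolding j g_def by (simp add: mod_add_right_eq)
          ultimately show "c \<in> g ` Jq" by blast
        qed
      qed
      then show ?thesis unfolding g_def using Cs_W[OF less.prems(1)] by simp
    qed
    have inj: "inj_on g Jq"
      unfolding inj_on_def Jq_def g_def using mod_add_inj by blast
    have "card {y. dl b s (W q b a m) y} = (\<Sum>c\<in>Cs b s (W q b a m). card (tlD b s (W q b a m) c))"
      using card_dl_decomp[OF less.prems(1), of s "W q b a m"] 3 by simp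
    also have "\<dots> = (\<Sum>j\<in>Jq. card (tlD b s (W q b a m) (g j)))"
      unfolding CsJ using inj by (simp add: sum.reindex)
    also have "\<dots> = (\<Sum>j\<in>Jq. F q b (int m - int j * int b - 1) (int s - int j))"
    proof (rule sum.cong[OF refl])
      fix j assume "j \<in> Jq"
      then have j: "j < q" "j \<le> s" "j*b < m" unfolding Jq_def by auto
      have fo: "fo b s (W q b a m) (g j) = j" unfolding g_def using fo_W[OF less.prems(1) j] .
      have "tlD b s (W q b a m) (g j) = {w. dl b (s - j) (W q b (a + (j*b+1)) (m - (j*b+1))) w}"
        unfolding tlD_def fo W_drop ..
      then have "card (tlD b s (W q b a m) (g j)) = F q b (int (m - (j*b+1))) (int (s - j))"
        using less.IH[of "m - (j*b+1)"] j less.prems by simp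
      also have "\<dots> = F q b (int m - int j * int b - 1) (int s - int j)"
        using j by (simp add: of_nat_diff algebra_simps)
      finally show "card (tlD b s (W q b a m) (g j)) = F q b (int m - int j * int b - 1) (int s - int j)" .
    qed
    also have "\<dots> = (\<Sum>j<q. F q b (int m - int j * int b - 1) (int s - int j))"
    proof (rule sum.mono_neutral_left)
      show "finite {..<q}" by simp
      show "Jq \<subseteq> {..<q}" unfolding Jq_def by auto
      show "\<forall>i\<in>{..<q} - Jq. F q b (int m - int i * int b - 1) (int s - int i) = 0"
      proof
        fix i assume "i \<in> {..<q} - Jq"
        then have "i < q" "\<not> (i \<le> s \<and> i*b < m)" unfolding Jq_def by auto
        then show "F q b (int m - int i * int b - 1) (int s - int i) = 0" by (rule F_zero_cases)
      qed
    qed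
    also have "\<dots> = F q b (int m) (int s)"
    proof -
      have "m > b*s" using 3 by (simp add: mult.commute)
      then have "int m > int b * int s" by (metis of_nat_less_iff of_nat_mult)
      from F_rec[OF _ this, of q] show ?thesis by simp
    qed
    finally show ?thesis .
  qed
qed

lemma F_mono: "F q b (m - int b) (s - 1) \<le> F q b m s"
proof (induction q b m s rule: F.induct)
  case (1 q b m s)
  show ?case
  proof (cases "s - 1 < 0 \<or> m - int b < int b * (s - 1)")
    case True
    then show ?thesis using F_neg[of "s-1" "m - int b" b q] by simp
  next
    case False
    show ?thesis
    proof (cases "m - int b = int b * (s - 1)")
      case True
      then have "m = int b * s" by (simp add: algebra_simps)
      moreover have "0 \<le> s" using False by simp
      ultimately show ?thesis using F_eq[of "s-1" "m - int b" b q] F_eq[of s m b q] True False by simp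
    next
      case False2: False
      have s1: "1 \<le> s" using False by simp
      have gt: "m - int b > int b * (s - 1)" using False False2 by simp
      then have gt2: "m > int b * s" by (simp add: algebra_simps)
      have ns: "\<not> (s < 0 \<or> m < int b * s)" "m \<noteq> int b * s" using s1 gt2 by auto
      have "F q b (m - int b) (s - 1) = (\<Sum>j<q. F q b (m - int b - int j * int b - 1) (s - 1 - int j))"
        using F_rec[OF _ gt, of q] s1 by simp
      also have "\<dots> \<le> (\<Sum>j<q. F q b (m - int j * int b - 1) (s - int j))"
      proof (rule sum_mono)
        fix j assume j: "j \<in> {..<q}"
        have e1: "m - int b - int j * int b - 1 = (m - int j * int b - 1) - int b" by simp
        have e2: "s - 1 - int j = (s - int j) - 1" by simp
        show "F q b (m - int b - int j * int b - 1) (s - 1 - int j) \<le> F q b (m - int j * int b - 1) (s - int j)"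
          unfolding e1 e2 using "1.IH"[OF ns j] .
      qed
      also have "\<dots> = F q b m s" using F_rec[OF _ gt2, of q] s1 by simp
      finally show ?thesis .
    qed
  qed
qed

lemma sum_antitone_card:
  fixes G :: "nat \<Rightarrow> nat"
  assumes "\<And>j. G (Suc j) \<le> G j" "finite S"
  shows "sum G S \<le> (\<Sum>j<card S. G j)"
  using assms(2)
proof (induction "card S" arbitrary: S)
  case 0 then show ?case by simp
next
  case (Suc k)
  then have ne: "S \<noteq> {}" by auto
  define M where "M = Max S"
  have MS: "M \<in> S" unfolding M_def using Suc ne by simp
  have ck: "card (S - {M}) = k" using Suc MS by simp
  have "S \<subseteq> {..M}" unfolding M_def using Suc by auto
  then have "card S \<le> Suc M" using card_mono[of "{..M}" S] by simp
  then have kM: "k \<le> M" using Suc by simp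
  have anti: "G M \<le> G k" using lift_Suc_antimono_le[of G, OF assms(1) kM] .
  have "sum G S = G M + sum G (S - {M})" using Suc MS by (simp add: sum.remove)
  also have "\<dots> \<le> G k + (\<Sum>j<k. G j)" using Suc.hyps(1)[of "S - {M}"] ck Suc anti by simp
  also have "\<dots> = (\<Sum>j<card S. G j)" using Suc.hyps(2)[symmetric] by simp
  finally show ?case .
qed

lemma sum_antitone_le:
  fixes G :: "nat \<Rightarrow> nat"
  assumes "\<And>j. G (Suc j) \<le> G j" "finite S" "card S \<le> q"
  shows "sum G S \<le> (\<Sum>j<q. G j)"
proof -
  have "sum G S \<le> (\<Sum>j<card S. G j)" using assms(1,2) by (rule sum_antitone_card[of G S])
  also have "\<dots> \<le> (\<Sum>j<q. G j)" by (rule sum_mono2) (use assms(3) in auto)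
  finally show ?thesis .
qed

lemma card_le_F:
  assumes "0 < b" "set z \<subseteq> {..<q}"
  shows "card {y. dl b s z y} \<le> F q b (int (length z)) (int s)"
  using assms
proof (induction "length z" arbitrary: z s rule: less_induct)
  case less
  define m where "m = length z"
  consider "m < s*b" | "m = s*b" | "m > s*b" by linarith
  then show ?case
  proof cases
    case 1
    then have "{y. dl b s z y} = {}" using dl_len[of b s z] unfolding m_def by fastforce
    then have "card {y. dl b s z y} = 0" by (simp only: card.empty)
    then show ?thesis by simp
  next
    case 2
    have "{y. dl b s z y} \<subseteq> {[]}" using dl_len[of b s z] 2 unfolding m_def by auto
    then have "card {y. dl b s z y} \<le> card {[]::nat list}" by (intro card_mono) simp_all
    then have "card {y. dl b s z y} \<le> 1" by simp
    moreover have "int (length z) = int b * int s" using 2 unfolding m_def by (metis of_nat_mult mult.commute)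
    ultimately show ?thesis using F_eq by simp
  next
    case 3
    define G where "G = (\<lambda>j::nat. F q b (int m - int j * int b - 1) (int s - int j))"
    let ?P = "\<lambda>c j. j \<le> s \<and> j*b < length z \<and> z!(j*b) = c"
    have Pfo: "?P c (fo b s z c)" if "c \<in> Cs b s z" for c
    proof -
      from that obtain j where "j \<le> s" "j*b < length z" "c = z!(j*b)" unfolding Cs_def by blast
      then have "?P c j" by simp
      then show ?thesis unfolding fo_def by (rule LeastI)
    qed
    have "card {y. dl b s z y} = (\<Sum>c\<in>Cs b s z. card (tlD b s z c))"
      using card_dl_decomp[OF less.prems(1), of s z] 3 unfolding m_def by simp
    also have "\<dots> \<le> (\<Sum>c\<in>Cs b s z. G (fo b s z c))"
    proof (rule sum_mono)
      fix c assume c: "c \<in> Cs b s z"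
      define f where "f = fo b s z c"
      have P: "f \<le> s" "f*b < m" using Pfo[OF c] unfolding f_def m_def by auto
      have "card (tlD b s z c) \<le> F q b (int (length (drop (f*b+1) z))) (int (s - f))"
        unfolding tlD_def f_def[symmetric]
        using less.hyps[of "drop (f*b+1) z" "s - f"] P less.prems set_drop_subset[of "f*b+1" z]
        unfolding m_def by auto
      also have "\<dots> = G f" unfolding G_def using P unfolding m_def by (simp add: of_nat_diff algebra_simps)
      finally show "card (tlD b s z c) \<le> G (fo b s z c)" unfolding f_def .
    qed
    also have "\<dots> = (\<Sum>j\<in>fo b s z ` Cs b s z. G j)"
    proof -
      have "inj_on (fo b s z) (Cs b s z)"
        by (rule inj_onI) (metis Pfo)
      then show ?thesis by (simp add: sum.reindex)
    qed
    also have "\<dots> \<le> (\<Sum>j<q. G j)"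
    proof (rule sum_antitone_le)
      show "G (Suc j) \<le> G j" for j
      proof -
        have e1: "int m - int (Suc j) * int b - 1 = (int m - int j * int b - 1) - int b" by (simp add: algebra_simps)
        have e2: "int s - int (Suc j) = (int s - int j) - 1" by simp
        show ?thesis unfolding G_def e1 e2 by (rule F_mono)
      qed
      show "finite (fo b s z ` Cs b s z)" by (simp add: finite_Cs)
      have "Cs b s z \<subseteq> {..<q}"
      proof
        fix c assume "c \<in> Cs b s z"
        then obtain j where "j*b < length z" "c = z!(j*b)" unfolding Cs_def by blast
        then have "c \<in> set z" by simp
        then show "c \<in> {..<q}" using less.prems(2) by blast
      qed
      then have "card (Cs b s z) \<le> q" using card_mono[of "{..<q}"] by fastforce
      then show "card (fo b s z ` Cs b s z) \<le> q" using card_image_le[of "Cs b s z" "fo b s z"] finite_Cs by fastforce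
    qed
    also have "\<dots> = F q b (int (length z)) (int s)"
    proof -
      have "m > b*s" using 3 by (simp add: mult.commute)
      then have "int m > int b * int s" by (metis of_nat_less_iff of_nat_mult)
      from F_rec[OF _ this, of q] show ?thesis unfolding G_def m_def by simp
    qed
    finally show ?thesis .
  qed
qed

lemma finite_seqs: "finite (seqs q n)"
  unfolding seqs_def using finite_lists_length_eq[of "{..<q}" n] by (simp add: conj_commute)

lemma W_seqs: "0 < q \<Longrightarrow> W q b a m \<in> seqs q m"
  unfolding seqs_def using W_set by auto

lemma Dmax_F:
  assumes "0 < q" "0 < b"
  shows "Dmax q b m s = F q b m s"
proof (cases "s < 0 \<or> m < int b * s")
  case True then show ?thesis unfolding Dmax_def using F_neg by simp
next
  case False
  show ?thesis
  proof (cases "m = int b * s")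
    case True then show ?thesis unfolding Dmax_def using F_eq False by simp
  next
    case False2: False
    have s0: "0 \<le> s" using False by simp
    have "0 \<le> int b * s" using s0 by simp
    then have m0: "0 \<le> m" using False by linarith
    define K where "K = {card (Dset (nat s) b z) | z. z \<in> seqs q (nat m)}"
    have "Max K = F q b m s"
    proof (rule Max_eqI)
      have "K = (\<lambda>z. card (Dset (nat s) b z)) ` seqs q (nat m)" unfolding K_def by auto
      then show "finite K" using finite_seqs by simp
      show "k \<le> F q b m s" if "k \<in> K" for k
      proof -
        from that obtain z where z: "z \<in> seqs q (nat m)" "k = card (Dset (nat s) b z)" unfolding K_def by blast
        then have "k \<le> F q b (int (length z)) (int (nat s))"
          using card_le_F[OF assms(2), of z q "nat s"] unfolding seqs_def Dset_dl by auto
        then show ?thesis using z s0 m0 unfolding seqs_def by simp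
      qed
      have "card (Dset (nat s) b (W q b 0 (nat m))) = F q b m s"
        unfolding Dset_dl using card_W[OF assms(2,1), of "nat s" 0 "nat m"] s0 m0 by simp
      moreover have "W q b 0 (nat m) \<in> seqs q (nat m)" by (rule W_seqs[OF assms(1)])
      ultimately show "F q b m s \<in> K" unfolding K_def
        by (intro CollectI exI[of _ "W q b 0 (nat m)"]) simp
    qed
    then show ?thesis unfolding Dmax_def K_def using False False2 by simp
  qed
qed

lemma card_inter_tl:
  assumes b: "0 < b" and l1: "length z1 = m" and l2: "length z2 = m" and ms: "m > s*b"
    and agree: "\<And>i. i < m \<Longrightarrow> (i mod b = 0 \<or> b \<le> i) \<Longrightarrow> z1!i = z2!i"
  shows "int (card ({y. dl b s z1 y} \<inter> {y. dl b s z2 y})) =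
     int (card {y. dl b s z1 y}) - int (card {y. dl b s (tl z1) y})
     + int (card ({y. dl b s (tl z1) y} \<inter> {y. dl b s (tl z2) y}))"
proof -
  have CsE: "Cs b s z1 = Cs b s z2"
    unfolding Cs_def l1 l2 by (intro image_cong refl) (use agree in auto)
  have foE: "fo b s z1 c = fo b s z2 c" for c
  proof -
    have "(\<lambda>j. j \<le> s \<and> j*b < length z1 \<and> z1!(j*b) = c) = (\<lambda>j. j \<le> s \<and> j*b < length z2 \<and> z2!(j*b) = c)"
      using agree l1 l2 by (intro ext) auto
    then show ?thesis unfolding fo_def by simp
  qed
  define c0 where "c0 = z1!0"
  have m0: "0 < m" using ms by simp
  have c0C: "c0 \<in> Cs b s z1" unfolding Cs_def c0_def using m0 l1 by (intro image_eqI[of _ _ 0]) auto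
  have fo0: "fo b s z1 c0 = 0" unfolding fo_def c0_def using m0 l1 by (intro Least_equality) auto
  have fo0': "fo b s z2 c0 = 0" using fo0 foE by simp
  have tl1: "tlD b s z1 c0 = {y. dl b s (tl z1) y}" unfolding tlD_def fo0 by (simp add: drop_Suc)
  have tl2: "tlD b s z2 c0 = {y. dl b s (tl z2) y}" unfolding tlD_def fo0' by (simp add: drop_Suc)
  have oth: "tlD b s z2 c = tlD b s z1 c" if c: "c \<in> Cs b s z1 - {c0}" for c
  proof -
    define f where "f = fo b s z1 c"
    have "f \<noteq> 0"
    proof
      assume f0: "f = 0"
      from c obtain j where "j \<le> s" "j*b < length z1" "c = z1!(j*b)" unfolding Cs_def by blast
      then have "f \<le> s \<and> f*b < length z1 \<and> z1!(f*b) = c" unfolding f_def fo_def by (intro LeastI) auto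
      then show False using f0 c unfolding c0_def by simp
    qed
    then have fb: "b \<le> f*b" by simp
    have "drop (f*b+1) z2 = drop (f*b+1) z1"
    proof (rule nth_equalityI)
      show "length (drop (f*b+1) z2) = length (drop (f*b+1) z1)" using l1 l2 by simp
      fix i assume "i < length (drop (f*b+1) z2)"
      then have im: "f*b+1+i < m" using l2 by simp
      moreover have "b \<le> f*b+1+i" using fb by linarith
      ultimately have "z1!(f*b+1+i) = z2!(f*b+1+i)" using agree by blast
      then show "drop (f*b+1) z2 ! i = drop (f*b+1) z1 ! i" using im l1 l2 by simp
    qed
    then show ?thesis unfolding tlD_def foE[symmetric] f_def by simp
  qed
  have fin: "finite (Cs b s z1)" by (rule finite_Cs)
  have "card ({y. dl b s z1 y} \<inter> {y. dl b s z2 y}) = (\<Sum>c\<in>Cs b s z1. card (tlD b s z1 c \<inter> tlD b s z2 c))"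
    using card_dl_inter_decomp[OF b, of s z1 z2] l1 l2 ms CsE by (simp add: mult.commute)
  also have "\<dots> = card (tlD b s z1 c0 \<inter> tlD b s z2 c0) + (\<Sum>c\<in>Cs b s z1 - {c0}. card (tlD b s z1 c \<inter> tlD b s z2 c))"
    using sum.remove[OF fin c0C] by simp
  also have "(\<Sum>c\<in>Cs b s z1 - {c0}. card (tlD b s z1 c \<inter> tlD b s z2 c)) = (\<Sum>c\<in>Cs b s z1 - {c0}. card (tlD b s z1 c))"
    by (rule sum.cong) (simp_all add: oth)
  finally have I: "card ({y. dl b s z1 y} \<inter> {y. dl b s z2 y}) = card ({y. dl b s (tl z1) y} \<inter> {y. dl b s (tl z2) y}) + (\<Sum>c\<in>Cs b s z1 - {c0}. card (tlD b s z1 c))"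
    unfolding tl1 tl2 .
  have "card {y. dl b s z1 y} = (\<Sum>c\<in>Cs b s z1. card (tlD b s z1 c))"
    using card_dl_decomp[OF b, of s z1] l1 ms by (simp add: mult.commute)
  also have "\<dots> = card (tlD b s z1 c0) + (\<Sum>c\<in>Cs b s z1 - {c0}. card (tlD b s z1 c))"
    using sum.remove[OF fin c0C] by simp
  finally have D: "card {y. dl b s z1 y} = card {y. dl b s (tl z1) y} + (\<Sum>c\<in>Cs b s z1 - {c0}. card (tlD b s z1 c))"
    unfolding tl1 .
  show ?thesis using I D by simp
qed

lemma tl_update: "0 < k \<Longrightarrow> tl (xs[k := v]) = (tl xs)[k - 1 := v]"
  by (cases xs; cases k) auto

lemma W_tl: "tl (W q b a m) = W q b (Suc a) (m - 1)"
  using W_drop[of 1 q b a m] by (simp add: drop_Suc)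

lemma chain:
  assumes b: "0 < b" and q: "0 < q" and r: "1 \<le> r" "r \<le> b" and n: "(t+1)*b \<le> n + 1" and t: "1 \<le> t"
  shows "int (card ({y. dl b t (W q b (b - r) (n - b + r)) y} \<inter> {y. dl b t ((W q b (b - r) (n - b + r))[r-1 := 1]) y}))
     = int (F q b (int (n - b + r)) (int t)) - int (F q b (int (n - b + 1)) (int t))
       + int (card ({y. dl b t (W q b (b - 1) (n - b + 1)) y} \<inter> {y. dl b t ((W q b (b - 1) (n - b + 1))[0 := 1]) y}))"
  using r(1)
proof (induction r rule: dec_induct)
  case base
  then show ?case by simp
next
  case (step k)
  have kb: "Suc k \<le> b" using step.hyps r(2) by simp
  have tb: "t*b \<le> n + 1 - b" using n by (simp add: algebra_simps)
  have "2*b \<le> (t+1)*b" using t by (intro mult_le_mono1) simp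
  then have nb: "b \<le> n" using n b by linarith
  define m where "m = n - b + Suc k"
  define z1 where "z1 = W q b (b - Suc k) m"
  define z2 where "z2 = z1[k := 1]"
  have ms: "m > t*b" unfolding m_def using tb step.hyps nb by linarith
  have ag: "z1!i = z2!i" if "i < m" "i mod b = 0 \<or> b \<le> i" for i
  proof -
    have "i \<noteq> k"
    proof
      assume "i = k"
      then have "i < b" "0 < i" using kb step.hyps by auto
      then show False using that(2) by simp
    qed
    then show ?thesis unfolding z2_def by simp
  qed
  have L1: "int (card ({y. dl b t z1 y} \<inter> {y. dl b t z2 y})) =
     int (card {y. dl b t z1 y}) - int (card {y. dl b t (tl z1) y})
     + int (card ({y. dl b t (tl z1) y} \<inter> {y. dl b t (tl z2) y}))"
    by (rule card_inter_tl[OF b _ _ ms ag]) (simp_all add: z1_def z2_def)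
  have tz1: "tl z1 = W q b (b - k) (n - b + k)" unfolding z1_def W_tl m_def using kb
    by (simp add: Suc_diff_Suc)
  have tz2: "tl z2 = (W q b (b - k) (n - b + k))[k - 1 := 1]"
    unfolding z2_def using tl_update[of k z1 1] step.hyps tz1 by simp
  have c1: "card {y. dl b t z1 y} = F q b (int (n - b + Suc k)) (int t)"
    unfolding z1_def m_def by (rule card_W[OF b q])
  have c2: "card {y. dl b t (W q b (b - k) (n - b + k)) y} = F q b (int (n - b + k)) (int t)"
    by (rule card_W[OF b q])
  note L1' = L1[unfolded tz1 tz2 c1 c2]
  have e: "Suc k - 1 = k" by simp
  show ?case unfolding e using L1' step.IH unfolding z2_def z1_def m_def by simp
qed

lemma dl_cons_cases:
  assumes d: "dl b s (a # X) y"
  shows "(\<exists>w. y = a # w \<and> dl b s X w) \<or> (0 < s \<and> dl b (s - 1) (drop b (a # X)) y)"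
  using d
proof (cases rule: dl.cases)
  case dl0 then show ?thesis using dl.dl0 by blast
next
  case (dlB u s' z)
  then have "drop b (a # X) = z" by (metis append_eq_conv_conj)
  then show ?thesis using dlB by simp
next
  case (dlC y')
  then show ?thesis by blast
qed

lemma dl_cons_right:
  assumes "0 < s" "b \<le> length z" "dl b (s - 1) (drop b z) y"
  shows "dl b s z y"
proof -
  have "dl b (Suc (s - 1)) (take b z @ drop b z) y" by (rule dlB) (use assms in simp_all)
  then show ?thesis using assms(1) by simp
qed

lemma I1:
  assumes b: "0 < b" and q: "1 < q" and L: "b \<le> L" and t: "1 \<le> t"
  shows "card ({y. dl b t (W q b (b-1) L) y} \<inter> {y. dl b t ((W q b (b-1) L)[0 := 1]) y})
       = F q b (int (L - b)) (int (t - 1))"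
proof -
  define X where "X = W q b (b-1) L"
  define R where "R = tl X"
  have lX: "length X = L" unfolding X_def by simp
  have X0: "X ! 0 = 0" unfolding X_def using L b by (simp add: W_nth)
  have XR: "X = 0 # R" unfolding R_def using X0 lX L b by (cases X) auto
  have YR: "X[0 := 1] = 1 # R" using XR by simp
  have dE: "drop b (0 # R) = drop b (1 # R)" using b by (cases b) auto
  have lR: "b \<le> length (0 # R)" "b \<le> length (1 # R)" using XR lX L by auto
  have "{y. dl b t X y} \<inter> {y. dl b t (X[0 := 1]) y} = {y. dl b (t - 1) (drop b X) y}"
  proof
    show "{y. dl b t X y} \<inter> {y. dl b t (X[0 := 1]) y} \<subseteq> {y. dl b (t - 1) (drop b X) y}"
    proof
      fix y assume "y \<in> {y. dl b t X y} \<inter> {y. dl b t (X[0 := 1]) y}"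
      then have d1: "dl b t (0 # R) y" and d2: "dl b t (1 # R) y" unfolding XR YR[unfolded XR] by auto
      from dl_cons_cases[OF d1] dl_cons_cases[OF d2] have "dl b (t - 1) (drop b (0 # R)) y"
        using dE by auto
      then show "y \<in> {y. dl b (t - 1) (drop b X) y}" unfolding XR by simp
    qed
    show "{y. dl b (t - 1) (drop b X) y} \<subseteq> {y. dl b t X y} \<inter> {y. dl b t (X[0 := 1]) y}"
    proof
      fix y assume "y \<in> {y. dl b (t - 1) (drop b X) y}"
      then have "dl b (t - 1) (drop b (0 # R)) y" unfolding XR by simp
      then have "dl b t (0 # R) y" "dl b t (1 # R) y"
        using dl_cons_right[of t b "0 # R" y] dl_cons_right[of t b "1 # R" y] dE lR t by auto
      then show "y \<in> {y. dl b t X y} \<inter> {y. dl b t (X[0 := 1]) y}" unfolding YR unfolding XR by simp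
    qed
  qed
  moreover have "drop b X = W q b (b - 1 + b) (L - b)" unfolding X_def W_drop ..
  ultimately show ?thesis unfolding X_def[symmetric] using card_W[OF b, of q "t - 1" "b - 1 + b" "L - b"] q by simp
qed

lemma F_ident:
  assumes b: "0 < b" and t: "1 \<le> t" and M: "int b * t \<le> M"
  shows "int (F q b M t) - int (F q b (M - int b) (t - 1))
       = int (F q b (M - 1) t) - int (F q b (M - 1 - int q * int b) (t - int q))"
proof (cases "M = int b * t")
  case True
  have "F q b M t = 1" using True t by (intro F_eq) auto
  moreover have "F q b (M - int b) (t - 1) = 1" using True t by (intro F_eq) (auto simp: algebra_simps)
  moreover have "F q b (M - 1) t = 0" using True by (intro F_neg) auto
  moreover have "F q b (M - 1 - int q * int b) (t - int q) = 0" using True by (intro F_neg) (auto simp: algebra_simps)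
  ultimately show ?thesis by simp
next
  case False
  then have gt: "M > int b * t" using M by simp
  have gt2: "M - int b > int b * (t - 1)" using gt by (simp add: algebra_simps)
  define f where "f = (\<lambda>j::nat. int (F q b (M - int j * int b - 1) (t - int j)))"
  have A: "int (F q b M t) = (\<Sum>j<q. f j)"
    unfolding f_def using F_rec[OF _ gt, of q] t by simp
  have B: "int (F q b (M - int b) (t - 1)) = (\<Sum>j<q. f (Suc j))"
  proof -
    have "int (F q b (M - int b) (t - 1)) = (\<Sum>j<q. int (F q b (M - int b - int j * int b - 1) (t - 1 - int j)))"
      using F_rec[OF _ gt2, of q] t by simp
    also have "\<dots> = (\<Sum>j<q. f (Suc j))" unfolding f_def
      by (rule sum.cong) (simp_all add: algebra_simps)
    finally show ?thesis .
  qed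
  have S: "(\<Sum>j<q. f j) - (\<Sum>j<q. f (Suc j)) = f 0 - f q"
    using sum.lessThan_Suc_shift[of f q] sum.lessThan_Suc[of f q] by simp
  have "f 0 = int (F q b (M - 1) t)" unfolding f_def by simp
  moreover have "f q = int (F q b (M - 1 - int q * int b) (t - int q))" unfolding f_def
    by (simp add: algebra_simps)
  ultimately show ?thesis using A B S by simp
qed

theorem lemma4p13:
  fixes q b t n :: nat
  assumes "q \<ge> 2" and "b \<ge> 2" and "t \<ge> 1" and "n \<ge> (t + 1) * b - 1"
  defines "x \<equiv> replicate b 0 @ cyc 1 (n - b) q b"
      and "y \<equiv> replicate (b - 1) 0 @ [1] @ cyc 1 (n - b) q b"
  shows "int (card (Dset t b x \<inter> Dset t b y)) =
           int (Dmax q b (int n) (int t)) - int (Dmax q b (int n - int b) (int t))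
           + int (Dmax q b (int n - int (q + 1) * int b) (int t - int q))
       \<and> int (Nminus q b n t) \<ge>
           int (Dmax q b (int n) (int t)) - int (Dmax q b (int n - int b) (int t))
           + int (Dmax q b (int n - int (q + 1) * int b) (int t - int q))"
proof -
  have b0: "0 < b" and q0: "0 < q" and q1: "1 < q" using assms by auto
  have n1: "(t+1)*b \<le> n + 1" using assms(4) b0 by (simp add: algebra_simps) 
  have "2*b \<le> (t+1)*b" using assms(3) by (intro mult_le_mono1) simp
  then have nb: "b \<le> n" "2*b \<le> n + 1" using n1 b0 by linarith+
  have xW: "x = W q b 0 n"
  proof (rule nth_equalityI)
    show "length x = length (W q b 0 n)" unfolding x_def cyc_def using nb by simp
    fix i assume "i < length x"
    then have i: "i < n" unfolding x_def cyc_def using nb by simp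
    show "x ! i = W q b 0 n ! i"
    proof (cases "i < b")
      case True then show ?thesis unfolding x_def using i by (simp add: W_nth nth_append)
    next
      case False
      then have "i div b = Suc ((i - b) div b)" using b0 by (simp add: le_div_geq)
      moreover have "0 + (i - b) < n - b" using i False by linarith
      ultimately show ?thesis unfolding x_def cyc_def using i False by (simp add: W_nth nth_append nth_upt del: upt_conv_Cons)
    qed
  qed
  have yW: "y = (W q b 0 n)[b - 1 := 1]"
  proof -
    obtain b' where b': "b = Suc b'" using b0 by (cases b) auto
    have "replicate b 0 = replicate b' (0::nat) @ [0]" unfolding b' by (simp add: replicate_append_same)
    then have "x = replicate b' 0 @ [0] @ cyc 1 (n - b) q b" unfolding x_def by simp
    then have "x[b - 1 := 1] = replicate b' 0 @ [1] @ cyc 1 (n - b) q b"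
      unfolding b' by (simp add: list_update_append)
    then have "(W q b 0 n)[b - 1 := 1] = replicate (b-1) 0 @ [1] @ cyc 1 (n - b) q b" using xW b' by simp
    then show ?thesis unfolding y_def by simp
  qed
  have ch: "int (card ({y. dl b t (W q b (b - b) (n - b + b)) y} \<inter> {y. dl b t ((W q b (b - b) (n - b + b))[b-1 := 1]) y}))
     = int (F q b (int (n - b + b)) (int t)) - int (F q b (int (n - b + 1)) (int t))
       + int (card ({y. dl b t (W q b (b - 1) (n - b + 1)) y} \<inter> {y. dl b t ((W q b (b - 1) (n - b + 1))[0 := 1]) y}))"
    by (rule chain[OF b0 q0 _ order_refl n1 assms(3)]) (use b0 in simp)
  have i1: "card ({y. dl b t (W q b (b - 1) (n - b + 1)) y} \<inter> {y. dl b t ((W q b (b - 1) (n - b + 1))[0 := 1]) y})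
      = F q b (int (n - b + 1 - b)) (int (t - 1))"
    by (rule I1[OF b0 q1 _ assms(3)]) (use nb in simp)
  define M where "M = int (n - b + 1)"
  have Mt: "int b * int t \<le> M" unfolding M_def using n1 nb by (simp add: algebra_simps of_nat_diff flip: of_nat_mult)
  have id: "int (F q b M (int t)) - int (F q b (M - int b) (int t - 1))
       = int (F q b (M - 1) (int t)) - int (F q b (M - 1 - int q * int b) (int t - int q))"
    by (rule F_ident[OF b0 _ Mt]) (use assms(3) in simp)
  have e1: "int (n - b + 1 - b) = M - int b" unfolding M_def using nb by simp
  have e2: "int (t - 1) = int t - 1" using assms(3) by simp
  have e3: "M - 1 = int n - int b" unfolding M_def using nb by simp
  have e4: "M - 1 - int q * int b = int n - int (q + 1) * int b" using e3 by (simp add: algebra_simps)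
  have main: "int (card (Dset t b x \<inter> Dset t b y)) =
      int (F q b (int n) (int t)) - int (F q b (int n - int b) (int t))
      + int (F q b (int n - int (q + 1) * int b) (int t - int q))"
  proof -
    have "int (card (Dset t b x \<inter> Dset t b y)) = int (F q b (int n) (int t)) - int (F q b M (int t))
       + int (F q b (M - int b) (int t - 1))"
      using ch i1 nb unfolding Dset_dl xW yW M_def e1[unfolded M_def] e2 by simp
    then show ?thesis using id[unfolded e4, unfolded e3] by simp
  qed
  have DF: "Dmax q b m s = F q b m s" for m s by (rule Dmax_F[OF q0 b0])
  have xs: "x \<in> seqs q n" unfolding xW by (rule W_seqs[OF q0])
  have ys: "y \<in> seqs q n"
  proof -
    have "set y \<subseteq> insert 1 (set (W q b 0 n))" unfolding yW by (rule set_update_subset_insert)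
    then have "set y \<subseteq> {..<q}" using W_set[OF q0, of b 0 n] q1 by auto
    then show ?thesis unfolding seqs_def yW by simp
  qed
  have xy: "x \<noteq> y"
  proof
    assume "x = y"
    then have "x ! (b - 1) = y ! (b - 1)" by simp
    moreover have "x ! (b - 1) = 0" unfolding xW using nb b0 by (simp add: W_nth)
    moreover have "y ! (b - 1) = 1" unfolding yW using nb b0 by simp
    ultimately show False by simp
  qed
  define K where "K = {card (Dset t b u \<inter> Dset t b v) | u v. u \<in> seqs q n \<and> v \<in> seqs q n \<and> u \<noteq> v}"
  have finK: "finite K"
  proof -
    have "K \<subseteq> (\<lambda>(u, v). card (Dset t b u \<inter> Dset t b v)) ` (seqs q n \<times> seqs q n)"
      unfolding K_def by auto
    then show ?thesis using finite_subset finite_seqs by blast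
  qed
  have "card (Dset t b x \<inter> Dset t b y) \<in> K" unfolding K_def using xs ys xy by blast
  then have "card (Dset t b x \<inter> Dset t b y) \<le> Nminus q b n t"
    unfolding Nminus_def K_def[symmetric] using finK by (simp add: Max_ge)
  then show ?thesis using main unfolding DF by simp
qed

end
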